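(* Let $G=(V,E,\ell,\Phi)$ be a trackable weak model (not necessarily strongly connected). Let $T\ge 1$ and let $\pi_1,\pi_2,\pi_3:\{0,1,\dots,T\}\to V$ be walks (i.e. $(\pi_j(i),\pi_j(i+1))\in E$ for $0\le i<T$, $j=1,2,3$) such that: (1) $\ell(\pi_1(i))=\ell(\pi_2(i))=\ell(\pi_3(i))$ for all $0\le i\le T$; (2) $\pi_1(0)=\pi_1(T)=a$; (3) $\pi_2(0)=\pi_2(T)=b$ with $b\neq a$; (4) $\pi_3(0)=a$ and $\pi_3(T)=b$. Then every node $\pi_1(i)$, $0\le i\le T$, is transient. (In particular, since a trackable model with $n_G(t)$ not bounded by a constant possesses such a triple, in such a model the cycle $\pi_1$ consists only of transient nodes.)
   Context: A (single-colored) weak model $G=(V,E,\ell,\Phi)$ consists of a finite set of nodes $V$, directed edges $E\subseteq V\times V$, a finite color set $\Phi$ and a coloring $\ell:V\to\Phi$. A walk of length $t$ is a node sequence $(x_1,\dots,x_t)$ with $(x_i,x_{i+1})\in E$. For $Y_{[t]}\in\Phi^t$, $\mathcal H_G(Y_{[t]})$ is the set of walks $(x_1,\dots,x_t)$ with $\ell(x_i)=Y_i$ for all $i$, and $n_G(t)=\max_{Y_{[t]}}|\mathcal H_G(Y_{[t]})|$. $G$ is trackable if $n_G(t)=O(t^k)$ for some $k\ge0$. A node $j$ is accessible from node $i$ if there is a directed path (possibly of length zero) from $i$ to $j$. A node $i$ is recurrent if $i$ is accessible from every node $j$ that is accessible from $i$; otherwise $i$ is transient. It is known (from prior work) that for a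 trackable model either $n_G(t)=O(1)$ or there exist walks $\pi_1,\pi_2,\pi_3$ as in the statement. *)

theory Defs
  imports Main "HOL-Library.Landau_Symbols"
begin

definition weak_model :: "'v set \<Rightarrow> ('v \<times> 'v) set \<Rightarrow> ('v \<Rightarrow> 'c) \<Rightarrow> 'c set \<Rightarrow> bool" where
  "weak_model V E l Phi \<longleftrightarrow> finite V \<and> E \<subseteq> V \<times> V \<and> finite Phi \<and> l ` V \<subseteq> Phi"

definition is_walk :: "'v set \<Rightarrow> ('v \<times> 'v) set \<Rightarrow> 'v list \<Rightarrow> bool" where
  "is_walk V E xs \<longleftrightarrow> set xs \<subseteq> V \<and> (\<forall>i. Suc i < length xs \<longrightarrow> (xs ! i, xs ! Suc i) \<in> E)"

definition hyp_set :: "'v set \<Rightarrow> ('v \<times> 'v) set \<Rightarrow> ('v \<Rightarrow> 'c) \<Rightarrow> 'c list \<Rightarrow> 'v list set" where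
  "hyp_set V E l Y = {xs. length xs = length Y \<and> is_walk V E xs \<and> map l xs = Y}"

definition n_G :: "'v set \<Rightarrow> ('v \<times> 'v) set \<Rightarrow> ('v \<Rightarrow> 'c) \<Rightarrow> 'c set \<Rightarrow> nat \<Rightarrow> nat" where
  "n_G V E l Phi t = Max (insert 0 ((\<lambda>Y. card (hyp_set V E l Y)) ` {Y. length Y = t \<and> set Y \<subseteq> Phi}))"

definition trackable :: "'v set \<Rightarrow> ('v \<times> 'v) set \<Rightarrow> ('v \<Rightarrow> 'c) \<Rightarrow> 'c set \<Rightarrow> bool" where
  "trackable V E l Phi \<longleftrightarrow> (\<exists>k::nat. (\<lambda>t. real (n_G V E l Phi t)) \<in> O(\<lambda>t. real t ^ k))"

definition accessible :: "('v \<times> 'v) set \<Rightarrow> 'v \<Rightarrow> 'v \<Rightarrow> bool" where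
  "accessible E i j \<longleftrightarrow> (i, j) \<in> E\<^sup>*"

definition recurrent :: "('v \<times> 'v) set \<Rightarrow> 'v \<Rightarrow> bool" where
  "recurrent E i \<longleftrightarrow> (\<forall>j. accessible E i j \<longrightarrow> accessible E j i)"

definition transient :: "('v \<times> 'v) set \<Rightarrow> 'v \<Rightarrow> bool" where
  "transient E i \<longleftrightarrow> \<not> recurrent E i"

end

theory Submission
  imports Defs "HOL-Real_Asymp.Real_Asymp"
begin

lemma walk_reach:
  assumes "\<forall>k<T. (\<pi> k, \<pi> (Suc k)) \<in> E" "i \<le> j" "j \<le> T"
  shows "(\<pi> i, \<pi> j) \<in> E\<^sup>*"
  using assms(2,3)
proof (induction j)
  case 0 then show ?case by simp
next
  case (Suc j)
  show ?case
  proof (cases "i = Suc j")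
    case True then show ?thesis by simp
  next
    case False
    then have "(\<pi> i, \<pi> j) \<in> E\<^sup>*" using Suc by simp
    moreover have "(\<pi> j, \<pi> (Suc j)) \<in> E" using assms(1) Suc by simp
    ultimately show ?thesis by simp
  qed
qed

lemma small_o_power:
  fixes L :: nat assumes "L>0" shows "(\<lambda>m::nat. real (m*L) ^ k) \<in> o(\<lambda>m. 2 ^ m)"
  using assms by (simp add: power_mult_distrib) real_asymp

lemma big_o_compose:
  fixes f :: "nat \<Rightarrow> real" and L :: nat assumes "f \<in> O(\<lambda>t. real t ^ k)" "L > 0"
  shows "(\<lambda>m. f (m*L)) \<in> O(\<lambda>m. real (m*L) ^ k)"
proof -
  have "filterlim (\<lambda>m::nat. m*L) at_top at_top"
    unfolding filterlim_at_top eventually_sequentially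
  proof (intro allI exI allI impI)
    fix z m :: nat assume "z \<le> m" then show "z \<le> m * L" using assms(2)
      by (cases L) auto
  qed
  then show ?thesis using landau_o.big.compose[OF assms(1)] by blast
qed

theorem corollary1:
  fixes V :: "'v set" and E :: "('v \<times> 'v) set" and l :: "'v \<Rightarrow> 'c" and Phi :: "'c set"
    and T :: nat and \<pi>1 \<pi>2 \<pi>3 :: "nat \<Rightarrow> 'v" and a b :: 'v
  assumes "weak_model V E l Phi"
    and "trackable V E l Phi"
    and "T \<ge> 1"
    and "\<forall>i<T. (\<pi>1 i, \<pi>1 (Suc i)) \<in> E"
    and "\<forall>i<T. (\<pi>2 i, \<pi>2 (Suc i)) \<in> E"
    and "\<forall>i<T. (\<pi>3 i, \<pi>3 (Suc i)) \<in> E"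
    and "\<forall>i\<le>T. l (\<pi>1 i) = l (\<pi>2 i) \<and> l (\<pi>2 i) = l (\<pi>3 i)"
    and "\<pi>1 0 = a" and "\<pi>1 T = a"
    and "\<pi>2 0 = b" and "\<pi>2 T = b" and "b \<noteq> a"
    and "\<pi>3 0 = a" and "\<pi>3 T = b"
  shows "\<forall>i\<le>T. transient E (\<pi>1 i)"
proof (rule ccontr)
  assume "\<not> (\<forall>i\<le>T. transient E (\<pi>1 i))"
  then obtain i where i: "i \<le> T" "recurrent E (\<pi>1 i)" unfolding transient_def by blast
  have ia: "(\<pi>1 i, a) \<in> E\<^sup>*" using walk_reach[OF assms(4) i(1) order_refl] assms(9) by simp
  have ab: "(a, b) \<in> E\<^sup>*" using walk_reach[OF assms(6), of 0 T] assms(13,14) by simp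
  have "(b, \<pi>1 i) \<in> E\<^sup>*" using i(2) ia ab unfolding recurrent_def accessible_def
    by (meson rtrancl_trans)
  then have "(b, a) \<in> E\<^sup>*" using ia by simp
  then obtain d where "(b, a) \<in> E ^^ d" using rtrancl_power by blast
  then obtain c where c: "c 0 = b" "c d = a" "\<forall>i<d. (c i, c (Suc i)) \<in> E"
    unfolding relpow_fun_conv by blast
  have d1: "d \<ge> 1" using c assms(12) by (cases d) auto
  define L where "L = 2*T + d"
  have L: "L > 0" "T < L" unfolding L_def using d1 assms(3) by auto
  define seg where "seg \<beta> o' = (if o' < T then (if \<beta> then \<pi>1 o' else \<pi>3 o')
       else if o' < 2*T then (if \<beta> then \<pi>3 (o'-T) else \<pi>2 (o'-T)) else c (o' - 2*T))" for \<beta> o'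
  define f where "f S i = seg (i div L \<in> S) (i mod L)" for S i
  have seg_edge: "(seg \<beta> r, seg \<beta> (Suc r)) \<in> E" if "Suc r < L" for \<beta> r
  proof -
    consider "Suc r < T" | "Suc r = T" | "T \<le> r" "Suc r < 2*T" | "Suc r = 2*T" | "2*T \<le> r"
      by linarith
    then show ?thesis
    proof cases
      case 1 then show ?thesis unfolding seg_def using assms(4,6) by auto
    next
      case 2
      then have h: "r < T" "\<not> Suc r < T" "Suc r < 2*T" "Suc r - T = 0" using assms(3) by auto
      have "(\<pi>1 r, \<pi>1 T) \<in> E" "(\<pi>3 r, \<pi>3 T) \<in> E" using assms(4,6) h(1) 2 by auto
      then show ?thesis unfolding seg_def using h assms(9,13,14,10) by (cases \<beta>) auto
    next
      case 3
      then have "r - T < T" "Suc r - T = Suc (r - T)" by auto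
      then show ?thesis unfolding seg_def using 3 assms(5,6) by auto
    next
      case 4
      then have "r - T < T" "Suc (r - T) = T" "Suc r - 2*T = 0" by auto
      have "(\<pi>2 (r-T), \<pi>2 T) \<in> E" "(\<pi>3 (r-T), \<pi>3 T) \<in> E"
        using assms(5,6) \<open>r - T < T\<close> \<open>Suc (r - T) = T\<close> by (metis, metis)
      then show ?thesis unfolding seg_def using 4 \<open>Suc r - 2*T = 0\<close> assms(11,14) c(1) by (cases \<beta>) auto
    next
      case 5
      then have "r - 2*T < d" "Suc r - 2*T = Suc (r - 2*T)" using that unfolding L_def by auto
      then show ?thesis unfolding seg_def using 5 c(3) by auto
    qed
  qed
  have f_edge: "(f S i, f S (Suc i)) \<in> E" for S i
  proof -
    define q r where "q = i div L" and "r = i mod L"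
    have i_eq: "i = q*L + r" "r < L" unfolding q_def r_def using L by auto
    show ?thesis
    proof (cases "Suc r < L")
      case True
      then have "Suc i = q*L + Suc r" using i_eq by simp
      then have "Suc i = Suc r + q*L" by simp
      then have e: "Suc i = Suc r + q*L" .
      have L0: "L \<noteq> 0" using L(1) by simp
      have "Suc i div L = q + Suc r div L" unfolding e by (rule div_mult_self1[OF L0])
      moreover have "Suc i mod L = Suc r mod L" unfolding e by (rule mod_mult_self1)
      ultimately have "Suc i div L = q" "Suc i mod L = Suc r" using True by simp_all
      moreover have "i div L = q" "i mod L = r" unfolding q_def r_def by simp_all
      ultimately
      show ?thesis unfolding f_def using True seg_edge by simp
    next
      case False
      then have r: "r = L - 1" and si: "Suc i = Suc q * L + 0" using i_eq L by auto
      have "seg \<beta> r = c (d - 1)" for \<beta> unfolding seg_def r L_def using d1 by auto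
      moreover have "seg \<beta> 0 = a" for \<beta> unfolding seg_def using assms(3,8,13) by auto
      moreover have "(c (d-1), a) \<in> E" using c d1 by (metis Suc_diff_1 diff_less less_one less_le_trans)
      ultimately show ?thesis unfolding f_def using i_eq si L by (simp only:) simp
    qed
  qed
  have f_col: "l (f S i) = l (f {} i)" for S i
  proof -
    have "i mod L < L" using L(1) by simp
    then show ?thesis unfolding f_def seg_def L_def using assms(7) by auto
  qed
  have f_ab: "f S (r*L + T) = (if r \<in> S then a else b)" for S r
  proof -
    have L0: "L \<noteq> 0" using L(1) by simp
    have "(T + r*L) div L = r + T div L" by (rule div_mult_self1[OF L0])
    moreover have "(T + r*L) mod L = T mod L" by (rule mod_mult_self1)
    ultimately have "(r*L+T) div L = r" "(r*L+T) mod L = T" using L(2) by (simp_all add: add.commute)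
    then show ?thesis unfolding f_def seg_def using assms(3,13,10) by auto
  qed
  have fV: "f S i \<in> V" for S i
    using f_edge[of S i] assms(1) unfolding weak_model_def by auto
  have key: "2 ^ m \<le> n_G V E l Phi (m*L)" for m
  proof -
    define Y where "Y = map (\<lambda>i. l (f {} i)) [0..<m*L]"
    define g where "g S = map (f S) [0..<m*L]" for S
    have gH: "g ` Pow {..<m} \<subseteq> hyp_set V E l Y"
    proof
      fix xs assume "xs \<in> g ` Pow {..<m}"
      then obtain S where xs: "xs = g S" by blast
      have "is_walk V E xs" unfolding is_walk_def xs g_def using fV f_edge by auto
      moreover have "map l xs = Y" unfolding xs g_def Y_def using f_col by simp
      ultimately show "xs \<in> hyp_set V E l Y" unfolding hyp_set_def xs g_def Y_def by simp
    qed
    have inj: "inj_on g (Pow {..<m})"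
    proof (rule inj_onI, rule ccontr)
      fix S S' assume S: "S \<in> Pow {..<m}" "S' \<in> Pow {..<m}" "g S = g S'" "S \<noteq> S'"
      then obtain r where r: "r < m" "(r \<in> S) \<noteq> (r \<in> S')" by blast
      have "r*L + T < m*L"
      proof -
        have "Suc r * L \<le> m * L" using r(1) by (intro mult_le_mono1) simp
        then show ?thesis using L(2) by simp
      qed
      then have "g S ! (r*L+T) = f S (r*L+T)" "g S' ! (r*L+T) = f S' (r*L+T)"
        unfolding g_def by simp_all
      then have "f S (r*L+T) = f S' (r*L+T)" using S(3) by simp
      then show False using r(2) f_ab assms(12) by (auto split: if_splits)
    qed
    have finH: "finite (hyp_set V E l Y)"
    proof (rule finite_subset)
      show "hyp_set V E l Y \<subseteq> {xs. set xs \<subseteq> V \<and> length xs = length Y}"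
        unfolding hyp_set_def is_walk_def by auto
      show "finite {xs. set xs \<subseteq> V \<and> length xs = length Y}"
        using assms(1) unfolding weak_model_def by (intro finite_lists_length_eq) auto
    qed
    have "2 ^ m = card (Pow {..<m::nat})" by (simp add: card_Pow)
    also have "\<dots> \<le> card (hyp_set V E l Y)" by (rule card_inj_on_le[OF inj gH finH])
    also have "\<dots> \<le> n_G V E l Phi (m*L)"
    proof -
      have YP: "Y \<in> {Y. length Y = m*L \<and> set Y \<subseteq> Phi}"
        using assms(1) fV unfolding weak_model_def Y_def by auto
      have "finite {Y. length Y = m*L \<and> set Y \<subseteq> Phi}"
        using assms(1) unfolding weak_model_def
        using finite_lists_length_eq[of Phi "m*L"] by (simp add: conj_commute)
      then show ?thesis unfolding n_G_def using YP by (intro Max_ge) auto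
    qed
    finally show ?thesis .
  qed
  obtain k where k: "(\<lambda>t. real (n_G V E l Phi t)) \<in> O(\<lambda>t. real t ^ k)"
    using assms(2) unfolding trackable_def by blast
  have 1: "(\<lambda>m. real (n_G V E l Phi (m*L))) \<in> O(\<lambda>m. real (m*L) ^ k)"
    by (rule big_o_compose[OF k L(1)])
  have 2: "(\<lambda>m::nat. (2::real) ^ m) \<in> O(\<lambda>m. real (n_G V E l Phi (m*L)))"
  proof (rule landau_o.big_mono, rule always_eventually, rule allI)
    fix m :: nat
    have "(2::real) ^ m \<le> real (n_G V E l Phi (m*L))"
      using key[of m] by (metis of_nat_le_iff of_nat_numeral of_nat_power)
    then show "norm ((2::real) ^ m) \<le> norm (real (n_G V E l Phi (m*L)))" by simp
  qed
  have "(\<lambda>m::nat. (2::real) ^ m) \<in> o(\<lambda>m. 2 ^ m)"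
    using landau_o.big_small_trans[OF landau_o.big_trans[OF 2 1] small_o_power[OF L(1)]] .
  then have "eventually (\<lambda>m::nat. (2::real) ^ m = 0) sequentially"
    by (simp add: landau_o.small_refl_iff)
  then show False by simp
qed

end
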